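(* In the zero-sum three-door Monty Hall game described in the context, the mixed strategy $P^*$ of Conie assigning probability $1/3$ to each of $1\,\mathrm{s}\,\mathrm{s}$, $2\,\mathrm{s}\,\mathrm{s}$, $3\,\mathrm{s}\,\mathrm{s}$ (choose a door uniformly at random, then always switch) is Conie's unique minimax strategy, i.e. the unique mixed strategy $P$ with $\min_Q W(P,Q)=\max_{P'}\min_Q W(P',Q)$.
   Context: Doors are numbered $1,2,3$. A pure strategy of Monte is a pair $(\theta,d)$ with $\theta\in\{1,2,3\}$ (the door hiding the prize) and $d\in\{1,2,3\}\setminus\{\theta\}$ (six strategies). A pure strategy of Conie is a triple $x\,a\,b$ with $x\in\{1,2,3\}$ and $a,b\in\{\mathrm{h},\mathrm{s}\}$ (twelve strategies). Under the profile $((\theta,d),x\,a\,b)$: Monte offers door $y=\theta$ if $x\neq\theta$ and $y=d$ if $x=\theta$; Conie's action is $a$ if $y$ is the smaller of the two doors in $\{1,2,3\}\setminus\{x\}$ and $b$ otherwise; her final choice is $z=x$ for action $\mathrm{h}$ and $z=y$ for action $\mathrm{s}$; she wins (payoff 1) iff $z=\theta$, else payoff 0; Monte's payoff is the negative. Mixed strategies are probability distributions on pure strategies, played independently; $W(P,Q)$ denotes the probability that Conie wins when Conie plays $P$ and Monte plays $Q$. *)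

theory Defs
  imports "HOL-Probability.Probability"
begin

datatype action = hold | switch

type_synonym monte_pure = "nat \<times> nat"
type_synonym conie_pure = "nat \<times> action \<times> action"

definition doors :: "nat set" where "doors = {1,2,3}"

definition monte_strats :: "monte_pure set" where
  "monte_strats = {(\<theta>, d). \<theta> \<in> doors \<and> d \<in> doors - {\<theta>}}"

definition conie_strats :: "conie_pure set" where
  "conie_strats = {(x, a, b). x \<in> doors}"

definition offered :: "monte_pure \<Rightarrow> conie_pure \<Rightarrow> nat" where
  "offered m c = (case m of (\<theta>, d) \<Rightarrow> case c of (x, a, b) \<Rightarrow>
     if x \<noteq> \<theta> then \<theta> else d)"

definition conie_action :: "monte_pure \<Rightarrow> conie_pure \<Rightarrow> action" where
  "conie_action m c = (case c of (x, a, b) \<Rightarrow>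
     if offered m c = Min (doors - {x}) then a else b)"

definition final_choice :: "monte_pure \<Rightarrow> conie_pure \<Rightarrow> nat" where
  "final_choice m c = (case c of (x, a, b) \<Rightarrow>
     (case conie_action m c of hold \<Rightarrow> x | switch \<Rightarrow> offered m c))"

definition payoff :: "conie_pure \<Rightarrow> monte_pure \<Rightarrow> real" where
  "payoff c m = (if final_choice m c = fst m then 1 else 0)"

definition conie_mixed :: "conie_pure pmf \<Rightarrow> bool" where
  "conie_mixed P \<longleftrightarrow> set_pmf P \<subseteq> conie_strats"

definition monte_mixed :: "monte_pure pmf \<Rightarrow> bool" where
  "monte_mixed Q \<longleftrightarrow> set_pmf Q \<subseteq> monte_strats"

definition W :: "conie_pure pmf \<Rightarrow> monte_pure pmf \<Rightarrow> real" where
  "W P Q = (\<Sum>c\<in>conie_strats. \<Sum>m\<in>monte_strats. pmf P c * pmf Q m * payoff c m)"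

definition guarantee :: "conie_pure pmf \<Rightarrow> real" where
  "guarantee P = (INF Q\<in>{Q. monte_mixed Q}. W P Q)"

definition minimax_strategy :: "conie_pure pmf \<Rightarrow> bool" where
  "minimax_strategy P \<longleftrightarrow> conie_mixed P \<and>
     guarantee P = (SUP P'\<in>{P'. conie_mixed P'}. guarantee P')"

definition P_star :: "conie_pure pmf" where
  "P_star = pmf_of_set {(1, switch, switch), (2, switch, switch), (3, switch, switch)}"

end

theory Submission
  imports Defs
begin

abbreviation "S == switch"
abbreviation "H == hold"

lemma UA: "(UNIV::action set) = {H,S}" using action.exhaust by auto
lemma CS0: "conie_strats = doors \<times> UNIV \<times> UNIV" by (auto simp: conie_strats_def)
lemma CS: "conie_strats = {(1,H,H),(1,H,S),(1,S,H),(1,S,S),(2,H,H),(2,H,S),(2,S,H),(2,S,S),(3,H,H),(3,H,S),(3,S,H),(3,S,S)}"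
  unfolding CS0 UA doors_def by auto
lemma MS: "monte_strats = {(1,2),(1,3),(2,1),(2,3),(3,1),(3,2)}"
  unfolding monte_strats_def doors_def by auto

lemma fin_CS: "finite conie_strats" by (simp add: CS)
lemma fin_MS: "finite monte_strats" by (simp add: MS)

definition w :: "conie_pure pmf \<Rightarrow> monte_pure \<Rightarrow> real" where
  "w P m = (\<Sum>c\<in>conie_strats. pmf P c * payoff c m)"

lemma payoff_nonneg: "payoff c m \<ge> 0" by (simp add: payoff_def)

lemma W_eq: "W P Q = (\<Sum>m\<in>monte_strats. pmf Q m * w P m)"
  unfolding W_def w_def
  apply (subst sum.swap)
  apply (rule sum.cong, rule refl)
  apply (subst sum_distrib_left)
  apply (rule sum.cong, rule refl)
  apply (simp only: mult.assoc mult.left_commute[of "pmf P _"])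
  done

lemma W_nonneg: "W P Q \<ge> 0"
  unfolding W_def by (intro sum_nonneg) (simp add: payoff_nonneg)

lemma W_return: "m \<in> monte_strats \<Longrightarrow> W P (return_pmf m) = w P m"
proof -
  assume m: "m \<in> monte_strats"
  have eq: "\<And>m'. pmf (return_pmf m) m' * w P m' = (if m' = m then w P m else 0)"
    by (simp add: pmf_return)
  have "W P (return_pmf m) = (\<Sum>m'\<in>monte_strats. if m' = m then w P m else 0)"
    unfolding W_eq eq ..
  also have "\<dots> = w P m" using fin_MS m by (simp add: sum.delta')
  finally show ?thesis .
qed

lemma mixed_return: "m \<in> monte_strats \<Longrightarrow> monte_mixed (return_pmf m)"
  by (simp add: monte_mixed_def)

lemma guarantee_le: "m \<in> monte_strats \<Longrightarrow> guarantee P \<le> w P m"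
  unfolding guarantee_def
  apply (rule cINF_lower2[where x="return_pmf m"])
    apply (rule bdd_belowI[where m=0]) apply (auto simp: W_nonneg mixed_return W_return)
  done

lemma guarantee_ge:
  assumes "\<And>m. m \<in> monte_strats \<Longrightarrow> g \<le> w P m"
  shows "g \<le> guarantee P"
  unfolding guarantee_def
proof (rule cINF_greatest)
  show "{Q. monte_mixed Q} \<noteq> {}" using mixed_return[of "(1,2)"] by (auto simp: MS)
next
  fix Q assume "Q \<in> {Q. monte_mixed Q}"
  hence sub: "set_pmf Q \<subseteq> monte_strats" by (simp add: monte_mixed_def)
  have "g = (\<Sum>m\<in>monte_strats. pmf Q m * g)"
    using sum_pmf_eq_1[OF fin_MS sub] by (simp add: sum_distrib_right[symmetric])
  also have "\<dots> \<le> (\<Sum>m\<in>monte_strats. pmf Q m * w P m)"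
    by (intro sum_mono mult_left_mono assms) auto
  finally show "g \<le> W P Q" by (simp add: W_eq)
qed

lemma pay: "payoff c m = (if final_choice m c = fst m then 1 else 0)" by (simp add: payoff_def)

lemma minD: "Min (doors - {x}) = (if x = 1 then 2 else 1)"
proof (cases "x = 1")
  case True thus ?thesis by (simp add: doors_def)
next
  case False
  hence "1 \<in> doors - {x}" by (simp add: doors_def)
  moreover have "\<forall>y\<in>doors - {x}. 1 \<le> y" by (auto simp: doors_def)
  ultimately have "Min (doors - {x}) = 1"
    by (intro Min_eqI) (auto simp: doors_def)
  thus ?thesis using False by simp
qed

lemmas expand = w_def CS payoff_def final_choice_def conie_action_def offered_def minD

lemma w_vals:
  fixes P defines "p \<equiv> pmf P"
  shows
  "w P (1,2) = p (1,H,H) + p (1,H,S) + p (2,S,H) + p (2,S,S) + p (3,S,H) + p (3,S,S)"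
  "w P (1,3) = p (1,H,H) + p (1,S,H) + p (2,S,H) + p (2,S,S) + p (3,S,H) + p (3,S,S)"
  "w P (2,1) = p (1,S,H) + p (1,S,S) + p (2,H,H) + p (2,H,S) + p (3,H,S) + p (3,S,S)"
  "w P (2,3) = p (1,S,H) + p (1,S,S) + p (2,H,H) + p (2,S,H) + p (3,H,S) + p (3,S,S)"
  "w P (3,1) = p (1,H,S) + p (1,S,S) + p (2,H,S) + p (2,S,S) + p (3,H,H) + p (3,H,S)"
  "w P (3,2) = p (1,H,S) + p (1,S,S) + p (2,H,S) + p (2,S,S) + p (3,H,H) + p (3,S,H)"
  unfolding p_def by (simp_all add: expand)


lemma pstar: "pmf P_star c = (if c \<in> {(1, S, S), (2, S, S), (3, S, S)} then 1/3 else 0)"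
  unfolding P_star_def by (simp add: indicator_def)

lemma MS_cases: "m \<in> monte_strats \<Longrightarrow> m = (1,2) \<or> m = (1,3) \<or> m = (2,1) \<or> m = (2,3) \<or> m = (3,1) \<or> m = (3,2)"
  by (simp add: MS)

lemma star_mixed: "conie_mixed P_star"
  unfolding conie_mixed_def P_star_def by (simp add: CS)

lemma guarantee_star: "guarantee P_star = 2/3"
proof (rule antisym)
  show "guarantee P_star \<le> 2/3"
    using guarantee_le[of "(1,2)" P_star] unfolding w_vals by (simp add: MS pstar)
  show "2/3 \<le> guarantee P_star"
    by (rule guarantee_ge) (auto dest!: MS_cases simp: w_vals pstar simp del: One_nat_def)
qed

lemma mixed_facts:
  assumes "conie_mixed P"
  defines "p \<equiv> pmf P"
  shows "p (1,H,H) + p (1,H,S) + p (1,S,H) + p (1,S,S) + p (2,H,H) + p (2,H,S) + p (2,S,H) + p (2,S,S)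
       + p (3,H,H) + p (3,H,S) + p (3,S,H) + p (3,S,S) = 1"
proof -
  have "sum (pmf P) conie_strats = 1"
    using assms(1) fin_CS by (intro sum_pmf_eq_1) (auto simp: conie_mixed_def)
  thus ?thesis unfolding p_def CS by (simp add: add.assoc)
qed

lemma guarantee_upper:
  assumes "conie_mixed P" shows "guarantee P \<le> 2/3"
proof -
  have g: "guarantee P \<le> w P (1,2)" "guarantee P \<le> w P (1,3)" "guarantee P \<le> w P (2,1)"
     "guarantee P \<le> w P (2,3)" "guarantee P \<le> w P (3,1)" "guarantee P \<le> w P (3,2)"
    by (auto intro!: guarantee_le simp: MS)
  have nn: "\<And>c. pmf P c \<ge> 0" by simp
  show ?thesis using g mixed_facts[OF assms]
      nn[of "(1,H,H)"] nn[of "(1,H,S)"] nn[of "(1,S,H)"] nn[of "(1,S,S)"]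
      nn[of "(2,H,H)"] nn[of "(2,H,S)"] nn[of "(2,S,H)"] nn[of "(2,S,S)"]
      nn[of "(3,H,H)"] nn[of "(3,H,S)"] nn[of "(3,S,H)"] nn[of "(3,S,S)"]
    unfolding w_vals by linarith
qed

lemma SUP_val: "(SUP P'\<in>{P'. conie_mixed P'}. guarantee P') = 2/3"
proof (rule cSup_eq_maximum)
  show "2/3 \<in> guarantee ` {P'. conie_mixed P'}"
    using star_mixed guarantee_star by (intro rev_image_eqI[where x=P_star]) auto
next
  fix x assume "x \<in> guarantee ` {P'. conie_mixed P'}"
  then obtain P' where "conie_mixed P'" "x = guarantee P'" by auto
  thus "x \<le> 2/3" using guarantee_upper by simp
qed

theorem mainTheorem8:
  shows "\<forall>P. minimax_strategy P \<longleftrightarrow> P = P_star"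
proof (intro allI iffI)
  fix P assume "P = P_star"
  thus "minimax_strategy P"
    by (simp add: minimax_strategy_def star_mixed guarantee_star SUP_val)
next
  fix P assume mm: "minimax_strategy P"
  hence cm: "conie_mixed P" and gv: "guarantee P = 2/3"
    by (auto simp: minimax_strategy_def SUP_val)
  have g: "2/3 \<le> w P (1,2)" "2/3 \<le> w P (1,3)" "2/3 \<le> w P (2,1)"
     "2/3 \<le> w P (2,3)" "2/3 \<le> w P (3,1)" "2/3 \<le> w P (3,2)"
    using guarantee_le[of _ P] gv by (auto simp: MS)
  note s1 = mixed_facts[OF cm]
  have nn: "\<And>c. pmf P c \<ge> 0" by simp
  have vals: "pmf P (1,H,H) = 0" "pmf P (1,H,S) = 0" "pmf P (1,S,H) = 0" "pmf P (1,S,S) = 1/3"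
             "pmf P (2,H,H) = 0" "pmf P (2,H,S) = 0" "pmf P (2,S,H) = 0" "pmf P (2,S,S) = 1/3"
             "pmf P (3,H,H) = 0" "pmf P (3,H,S) = 0" "pmf P (3,S,H) = 0" "pmf P (3,S,S) = 1/3"
    using g s1 nn[of "(1,H,H)"] nn[of "(1,H,S)"] nn[of "(1,S,H)"] nn[of "(1,S,S)"]
      nn[of "(2,H,H)"] nn[of "(2,H,S)"] nn[of "(2,S,H)"] nn[of "(2,S,S)"]
      nn[of "(3,H,H)"] nn[of "(3,H,S)"] nn[of "(3,S,H)"] nn[of "(3,S,S)"]
    unfolding w_vals by linarith+
  show "P = P_star"
  proof (rule pmf_eqI)
    fix c
    show "pmf P c = pmf P_star c"
    proof (cases "c \<in> conie_strats")
      case True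
      thus ?thesis unfolding CS using vals by (auto simp: pstar)
    next
      case False
      hence "c \<notin> set_pmf P" using cm by (auto simp: conie_mixed_def)
      hence "pmf P c = 0" by (simp add: set_pmf_eq)
      moreover have "c \<notin> set_pmf P_star" using False star_mixed by (auto simp: conie_mixed_def)
      hence "pmf P_star c = 0" by (simp add: set_pmf_eq)
      ultimately show ?thesis by simp
    qed
  qed
qed

end
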